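(* Let $N\ge1$, $S_1,\dots,S_N\ge1$, and consider an $S_1\times\cdots\times S_N$-setting $N$-partite correlation experiment with joint distributions $P_{(s_1,\dots,s_N)}$ on $\Lambda_1^{(s_1)}\times\cdots\times\Lambda_N^{(s_N)}$, where the outcomes are real with $\lambda_n^{(s_n)}\in\Lambda_n^{(s_n)}\subseteq[-1,1]$, $\sup\Lambda_n^{(s_n)}=1$, $\inf\Lambda_n^{(s_n)}=-1$ for all $s_n,n$ (of any spectral type, discrete or continuous), and suppose it admits an LHV model. Then for any collection of real coefficients $\gamma_{(s_{n_1},\dots,s_{n_M})}$ ($1\le M\le N$, $1\le n_1<\dots<n_M\le N$, $s_{n_j}\in\{1,\dots,S_{n_j}\}$) the tight linear LHV constraint on correlation functions $$\min_{\eta_1\in\{-1,1\}^{S_1},\dots,\eta_N\in\{-1,1\}^{S_N}}\sum_{\substack{1\le n_1<\dots<n_M\le N\\ M=1,\dots,N}}F_M^{(\gamma)}(\eta_{n_1},\dots,\eta_{n_M})\le\sum_{\substack{1\le n_1<\dots<n_M\le N\\ M=1,\dots,N}}\ \sum_{s_{n_1},\dots,s_{n_M}}\gamma_{(s_{n_1},\dots,s_{n_M})}\big\langle\lambda_{n_1}^{(s_{n_1})}\cdots\lambda_{n_M}^{(s_{n_M})}\big\rangle_{LHV}\le\max_{\eta_1\in\{-1,1\}^{S_1},\dots,\eta_N\in\{-1,1\}^{S_N}}\sum_{\substack{1\le n_1<\dots<n_M\le N\\ M=1,\dots,N}}F_M^{(\gamma)}(\eta_{n_1},\dots,\eta_{n_M})$$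 holds, where $F_M^{(\gamma)}(\eta_{n_1},\dots,\eta_{n_M})=\sum_{s_{n_1},\dots,s_{n_M}}\gamma_{(s_{n_1},\dots,s_{n_M})}\eta_{n_1}^{(s_{n_1})}\cdots\eta_{n_M}^{(s_{n_M})}$ for $\eta_n=(\eta_n^{(1)},\dots,\eta_n^{(S_n)})\in\mathbb{R}^{S_n}$; the extrema are over all $2^{S_1+\dots+S_N}$ vertices of the hypercube $[-1,1]^{S_1+\dots+S_N}$.
   Context: The experiment admitting an LHV model is characterized by the existence of a probability measure $\mu$ on the product of all outcome spaces $\prod_{n}\prod_{s_n}\Lambda_n^{(s_n)}$ whose marginal on $(\lambda_1^{(s_1)},\dots,\lambda_N^{(s_N)})$ is $P_{(s_1,\dots,s_N)}$ for every joint setting. The correlation function $\langle\lambda_{n_1}^{(s_{n_1})}\cdots\lambda_{n_M}^{(s_{n_M})}\rangle_{LHV}$ is $\int\lambda_{n_1}^{(s_{n_1})}\cdots\lambda_{n_M}^{(s_{n_M})}\,dP_{(s_1,\dots,s_N)}$ for any joint setting with the given settings at sites $n_1,\dots,n_M$ (in the LHV case it does not depend on the settings at the other sites). A linear LHV constraint is tight if, within the class of experiments with the given outcome sets admitting an LHV model, its bounds cannot be improved. *)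

theory Defs
  imports "HOL-Probability.Probability"
begin

text \<open>Parties are indexed by 0..N-1, settings of party n by 0..S n - 1.
  Lam n s is the outcome set of party n under setting s.\<close>

definition settings :: "nat \<Rightarrow> (nat \<Rightarrow> nat) \<Rightarrow> (nat \<Rightarrow> nat) set" where
  "settings N S = PiE {..<N} (\<lambda>n. {..<S n})"

definition outcome_space ::
  "nat \<Rightarrow> (nat \<Rightarrow> nat \<Rightarrow> real set) \<Rightarrow> (nat \<Rightarrow> nat) \<Rightarrow> (nat \<Rightarrow> real) measure" where
  "outcome_space N Lam s = PiM {..<N} (\<lambda>n. restrict_space borel (Lam n (s n)))"

definition all_pairs :: "nat \<Rightarrow> (nat \<Rightarrow> nat) \<Rightarrow> (nat \<times> nat) set" where
  "all_pairs N S = {(n, s). n < N \<and> s < S n}"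

definition hidden_space ::
  "nat \<Rightarrow> (nat \<Rightarrow> nat) \<Rightarrow> (nat \<Rightarrow> nat \<Rightarrow> real set) \<Rightarrow> (nat \<times> nat \<Rightarrow> real) measure" where
  "hidden_space N S Lam = PiM (all_pairs N S) (\<lambda>(n, s). restrict_space borel (Lam n s))"

definition corr_experiment ::
  "nat \<Rightarrow> (nat \<Rightarrow> nat) \<Rightarrow> (nat \<Rightarrow> nat \<Rightarrow> real set) \<Rightarrow> ((nat \<Rightarrow> nat) \<Rightarrow> (nat \<Rightarrow> real) measure) \<Rightarrow> bool" where
  "corr_experiment N S Lam P \<longleftrightarrow>
     (\<forall>s \<in> settings N S. prob_space (P s) \<and> sets (P s) = sets (outcome_space N Lam s))"

definition admits_LHV ::
  "nat \<Rightarrow> (nat \<Rightarrow> nat) \<Rightarrow> (nat \<Rightarrow> nat \<Rightarrow> real set) \<Rightarrow> ((nat \<Rightarrow> nat) \<Rightarrow> (nat \<Rightarrow> real) measure) \<Rightarrow> bool" where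
  "admits_LHV N S Lam P \<longleftrightarrow>
     (\<exists>\<mu>. prob_space \<mu> \<and> sets \<mu> = sets (hidden_space N S Lam) \<and>
        (\<forall>s \<in> settings N S.
           distr \<mu> (outcome_space N Lam s) (\<lambda>\<omega>. \<lambda>n\<in>{..<N}. \<omega> (n, s n)) = P s))"

definition LHV_experiment where
  "LHV_experiment N S Lam P \<longleftrightarrow> corr_experiment N S Lam P \<and> admits_LHV N S Lam P"

text \<open>Correlation function for the sites in A with settings t (t \<in> PiE A ...):
  computed w.r.t. the joint setting that extends t by setting 0 at the other sites
  (in the LHV case it does not depend on this choice).\<close>
definition extend_setting :: "nat \<Rightarrow> nat set \<Rightarrow> (nat \<Rightarrow> nat) \<Rightarrow> (nat \<Rightarrow> nat)" where
  "extend_setting N A t = (\<lambda>n\<in>{..<N}. if n \<in> A then t n else 0)"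

definition correlation ::
  "nat \<Rightarrow> ((nat \<Rightarrow> nat) \<Rightarrow> (nat \<Rightarrow> real) measure) \<Rightarrow> nat set \<Rightarrow> (nat \<Rightarrow> nat) \<Rightarrow> real" where
  "correlation N P A t = (\<integral>x. (\<Prod>n\<in>A. x n) \<partial>(P (extend_setting N A t)))"

definition site_sets :: "nat \<Rightarrow> nat set set" where
  "site_sets N = {A. A \<subseteq> {..<N} \<and> A \<noteq> {}}"

text \<open>gamma A t is the coefficient gamma_(s_{n_1},...,s_{n_M}) for A = {n_1,...,n_M},
  t n_j = s_{n_j}.\<close>
definition Bell_value ::
  "nat \<Rightarrow> (nat \<Rightarrow> nat) \<Rightarrow> (nat set \<Rightarrow> (nat \<Rightarrow> nat) \<Rightarrow> real) \<Rightarrow> ((nat \<Rightarrow> nat) \<Rightarrow> (nat \<Rightarrow> real) measure) \<Rightarrow> real" where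
  "Bell_value N S \<gamma> P =
     (\<Sum>A\<in>site_sets N. \<Sum>t\<in>PiE A (\<lambda>n. {..<S n}). \<gamma> A t * correlation N P A t)"

text \<open>F_M^(gamma)(eta_{n_1},...,eta_{n_M}); eta n s = eta_n^(s).\<close>
definition F_gamma ::
  "(nat \<Rightarrow> nat) \<Rightarrow> (nat set \<Rightarrow> (nat \<Rightarrow> nat) \<Rightarrow> real) \<Rightarrow> nat set \<Rightarrow> (nat \<Rightarrow> nat \<Rightarrow> real) \<Rightarrow> real" where
  "F_gamma S \<gamma> A \<eta> = (\<Sum>t\<in>PiE A (\<lambda>n. {..<S n}). \<gamma> A t * (\<Prod>n\<in>A. \<eta> n (t n)))"

definition F_total ::
  "nat \<Rightarrow> (nat \<Rightarrow> nat) \<Rightarrow> (nat set \<Rightarrow> (nat \<Rightarrow> nat) \<Rightarrow> real) \<Rightarrow> (nat \<Rightarrow> nat \<Rightarrow> real) \<Rightarrow> real" where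
  "F_total N S \<gamma> \<eta> = (\<Sum>A\<in>site_sets N. F_gamma S \<gamma> A \<eta>)"

definition vertices :: "nat \<Rightarrow> (nat \<Rightarrow> nat) \<Rightarrow> (nat \<Rightarrow> nat \<Rightarrow> real) set" where
  "vertices N S = PiE {..<N} (\<lambda>n. PiE {..<S n} (\<lambda>_. {-1, 1}))"

end

theory Submission imports Defs begin

definition upd :: "(nat \<Rightarrow> nat \<Rightarrow> real) \<Rightarrow> nat \<Rightarrow> nat \<Rightarrow> real \<Rightarrow> (nat \<Rightarrow> nat \<Rightarrow> real)" where
  "upd \<eta> n0 s0 x = \<eta>(n0 := (\<eta> n0)(s0 := x))"

lemma term_affine:
  assumes "finite A"
  shows "(\<Prod>n\<in>A. upd \<eta> n0 s0 x n (t n)) =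
     (1+x)/2 * (\<Prod>n\<in>A. upd \<eta> n0 s0 1 n (t n)) + (1-x)/2 * (\<Prod>n\<in>A. upd \<eta> n0 s0 (-1) n (t n))"
proof (cases "n0 \<in> A \<and> t n0 = s0")
  case True
  have "(\<Prod>n\<in>A. upd \<eta> n0 s0 y n (t n)) = y * (\<Prod>n\<in>A-{n0}. \<eta> n (t n))" for y
  proof -
    have "(\<Prod>n\<in>A. upd \<eta> n0 s0 y n (t n)) = upd \<eta> n0 s0 y n0 (t n0) * (\<Prod>n\<in>A-{n0}. upd \<eta> n0 s0 y n (t n))"
      using True assms prod.remove[OF assms, of n0 "\<lambda>n. upd \<eta> n0 s0 y n (t n)"] by simp
    also have "(\<Prod>n\<in>A-{n0}. upd \<eta> n0 s0 y n (t n)) = (\<Prod>n\<in>A-{n0}. \<eta> n (t n))"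
      by (rule prod.cong) (auto simp: upd_def)
    finally show ?thesis using True by (simp add: upd_def)
  qed
  then show ?thesis by (simp add: algebra_simps add_divide_distrib diff_divide_distrib)
next
  case False
  have "(\<Prod>n\<in>A. upd \<eta> n0 s0 y n (t n)) = (\<Prod>n\<in>A. \<eta> n (t n))" for y
    by (rule prod.cong) (use False in \<open>auto simp: upd_def\<close>)
  then show ?thesis by (simp add: algebra_simps add_divide_distrib diff_divide_distrib)
qed

lemma F_affine:
  "F_total N S \<gamma> (upd \<eta> n0 s0 x) =
     (1+x)/2 * F_total N S \<gamma> (upd \<eta> n0 s0 1) + (1-x)/2 * F_total N S \<gamma> (upd \<eta> n0 s0 (-1))"
proof -
  have fin: "A \<in> site_sets N \<Longrightarrow> finite A" for A
    unfolding site_sets_def using finite_subset by blast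
  show ?thesis
    unfolding F_total_def F_gamma_def sum_distrib_left sum.distrib[symmetric]
    apply (rule sum.cong[OF refl])
    apply (rule sum.cong[OF refl])
    apply (subst term_affine[OF fin], assumption)
    apply (simp add: algebra_simps)
    done
qed

lemma F_cong:
  assumes "\<And>n s. n < N \<Longrightarrow> s < S n \<Longrightarrow> \<eta> n s = \<eta>' n s"
  shows "F_total N S \<gamma> \<eta> = F_total N S \<gamma> \<eta>'"
  unfolding F_total_def F_gamma_def
  apply (rule sum.cong[OF refl])
  apply (rule sum.cong[OF refl])
  apply (rule arg_cong[where f="\<lambda>y. _ * y"])
  apply (rule prod.cong[OF refl])
  apply (rule assms)
  apply (auto simp: site_sets_def PiE_def Pi_def)
  done

lemma convex_bound:
  fixes a b m M p q :: real
  assumes "a \<ge> 0" "b \<ge> 0" "a + b = 1" "m \<le> p" "p \<le> M" "m \<le> q" "q \<le> M"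
  shows "m \<le> a*p + b*q \<and> a*p + b*q \<le> M"
proof -
  have "a*m \<le> a*p" "b*m \<le> b*q" "a*p \<le> a*M" "b*q \<le> b*M"
    using assms by (auto intro: mult_left_mono)
  moreover have "a*m + b*m = m" "a*M+b*M = M" using assms(3) by (metis distrib_right mult_1)+
  ultimately show ?thesis by linarith
qed

lemma vertices_fin: "finite (vertices N S)" "vertices N S \<noteq> {}"
  unfolding vertices_def by (auto intro!: finite_PiE simp: PiE_eq_empty_iff)

lemma vertex_bound_ind:
  assumes "finite C"
  shows "\<forall>\<eta>. (\<forall>n<N. \<forall>s<S n. \<eta> n s \<in> {-1..1}) \<and> (\<forall>n<N. \<forall>s<S n. (n,s) \<notin> C \<longrightarrow> \<eta> n s \<in> {-1,1})
     \<longrightarrow> Min (F_total N S \<gamma> ` vertices N S) \<le> F_total N S \<gamma> \<eta> \<and> F_total N S \<gamma> \<eta> \<le> Max (F_total N S \<gamma> ` vertices N S)"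
  using assms
proof (induction C rule: finite_induct)
  case empty
  show ?case
  proof (intro allI impI)
    fix \<eta> :: "nat \<Rightarrow> nat \<Rightarrow> real"
    assume h: "(\<forall>n<N. \<forall>s<S n. \<eta> n s \<in> {-1..1}) \<and> (\<forall>n<N. \<forall>s<S n. (n,s) \<notin> {} \<longrightarrow> \<eta> n s \<in> {-1,1})"
    define \<eta>' where "\<eta>' = (\<lambda>n\<in>{..<N}. \<lambda>s\<in>{..<S n}. \<eta> n s)"
    have v: "\<eta>' \<in> vertices N S" using h unfolding vertices_def \<eta>'_def by auto
    have "F_total N S \<gamma> \<eta> = F_total N S \<gamma> \<eta>'" by (rule F_cong) (simp add: \<eta>'_def)
    then show "Min (F_total N S \<gamma> ` vertices N S) \<le> F_total N S \<gamma> \<eta> \<and> F_total N S \<gamma> \<eta> \<le> Max (F_total N S \<gamma> ` vertices N S)"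
      using v vertices_fin by (auto intro!: Min_le Max_ge)
  qed
next
  case (insert c C)
  obtain n0 s0 where c: "c = (n0, s0)" by fastforce
  show ?case
  proof (intro allI impI)
    fix \<eta> :: "nat \<Rightarrow> nat \<Rightarrow> real"
    assume h: "(\<forall>n<N. \<forall>s<S n. \<eta> n s \<in> {-1..1}) \<and> (\<forall>n<N. \<forall>s<S n. (n,s) \<notin> insert c C \<longrightarrow> \<eta> n s \<in> {-1,1})"
    show "Min (F_total N S \<gamma> ` vertices N S) \<le> F_total N S \<gamma> \<eta> \<and> F_total N S \<gamma> \<eta> \<le> Max (F_total N S \<gamma> ` vertices N S)"
    proof (cases "n0 < N \<and> s0 < S n0")
      case False
      then have "(\<forall>n<N. \<forall>s<S n. (n,s) \<notin> C \<longrightarrow> \<eta> n s \<in> {-1,1})" using h c by auto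
      then show ?thesis using insert.IH h by blast
    next
      case True
      define x where "x = \<eta> n0 s0"
      have x: "-1 \<le> x" "x \<le> 1" using h True x_def by auto
      have eq: "\<eta> = upd \<eta> n0 s0 x" unfolding upd_def x_def by simp
      have hp: "Min (F_total N S \<gamma> ` vertices N S) \<le> F_total N S \<gamma> (upd \<eta> n0 s0 y) \<and> F_total N S \<gamma> (upd \<eta> n0 s0 y) \<le> Max (F_total N S \<gamma> ` vertices N S)"
        if "y \<in> {-1,1}" for y
        apply (rule insert.IH[rule_format])
        using h that c by (auto simp: upd_def)
      have "F_total N S \<gamma> \<eta> = (1+x)/2 * F_total N S \<gamma> (upd \<eta> n0 s0 1) + (1-x)/2 * F_total N S \<gamma> (upd \<eta> n0 s0 (-1))"
        by (subst eq, rule F_affine)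
      moreover have "(1+x)/2 \<ge> 0" "(1-x)/2 \<ge> 0" "(1+x)/2 + (1-x)/2 = 1" using x by (auto simp: field_simps)
      ultimately show ?thesis
        using convex_bound[of "(1+x)/2" "(1-x)/2" "Min (F_total N S \<gamma> ` vertices N S)" "F_total N S \<gamma> (upd \<eta> n0 s0 1)" "Max (F_total N S \<gamma> ` vertices N S)" "F_total N S \<gamma> (upd \<eta> n0 s0 (-1))"] hp[of 1] hp[of "-1"]
        by auto
    qed
  qed
qed

lemma vertex_bound:
  assumes "\<And>n s. n < N \<Longrightarrow> s < S n \<Longrightarrow> \<eta> n s \<in> {-1..1}"
  shows "Min (F_total N S \<gamma> ` vertices N S) \<le> F_total N S \<gamma> \<eta> \<and> F_total N S \<gamma> \<eta> \<le> Max (F_total N S \<gamma> ` vertices N S)"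
proof -
  have "finite (all_pairs N S)"
  proof -
    have "all_pairs N S = Sigma {..<N} (\<lambda>n. {..<S n})" unfolding all_pairs_def by auto
    then show ?thesis by simp
  qed
  from vertex_bound_ind[OF this, of N S \<gamma>] show ?thesis using assms unfolding all_pairs_def by auto
qed


lemma coord_meas:
  assumes "n < N" "s < S n"
  shows "(\<lambda>\<omega>. \<omega> (n,s)) \<in> measurable (hidden_space N S Lam) (restrict_space borel (Lam n s))"
proof -
  have "(n,s) \<in> all_pairs N S" using assms by (simp add: all_pairs_def)
  from measurable_component_singleton[OF this, of "\<lambda>(n,s). restrict_space borel (Lam n s)"]
  show ?thesis unfolding hidden_space_def by simp
qed

lemma coord_borel:
  assumes "n < N" "s < S n"
  shows "(\<lambda>\<omega>. \<omega> (n,s)) \<in> borel_measurable (hidden_space N S Lam)"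
proof -
  have "(\<lambda>\<omega>. \<omega> (n,s)) \<in> measurable (hidden_space N S Lam) (restrict_space borel (Lam n s))"
    using assms by (rule coord_meas)
  from measurable_compose[OF this measurable_restrict_space1[OF measurable_ident]]
  show ?thesis by simp
qed

lemma coord_space:
  assumes "n < N" "s < S n" "\<omega> \<in> space (hidden_space N S Lam)"
  shows "\<omega> (n,s) \<in> Lam n s"
proof -
  have "(n,s) \<in> all_pairs N S" using assms by (simp add: all_pairs_def)
  then show ?thesis using assms(3) unfolding hidden_space_def space_PiM
    by (auto dest!: PiE_mem simp: space_restrict_space)
qed

lemma g_meas:
  assumes "s \<in> settings N S"
  shows "(\<lambda>\<omega>. \<lambda>n\<in>{..<N}. \<omega> (n, s n)) \<in> measurable (hidden_space N S Lam) (outcome_space N Lam s)"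
  unfolding outcome_space_def
  apply (rule measurable_restrict)
  apply (rule coord_meas)
  using assms by (auto simp: settings_def)

lemma sitesD: "A \<in> site_sets N \<Longrightarrow> finite A \<and> A \<subseteq> {..<N}"
  unfolding site_sets_def using finite_subset by blast

lemma F_meas:
  "(\<lambda>\<omega>. F_total N S \<gamma> (\<lambda>n s. \<omega> (n,s))) \<in> borel_measurable (hidden_space N S Lam)"
  unfolding F_total_def F_gamma_def
  apply (intro borel_measurable_sum borel_measurable_times borel_measurable_const borel_measurable_prod)
  apply (rule coord_borel)
  apply (auto dest!: sitesD simp: PiE_def Pi_def)
  done

lemma F_bounded:
  assumes "\<forall>n<N. \<forall>s<S n. Lam n s \<subseteq> {-1..1}" "\<omega> \<in> space (hidden_space N S Lam)"
  shows "Min (F_total N S \<gamma> ` vertices N S) \<le> F_total N S \<gamma> (\<lambda>n s. \<omega> (n,s)) \<and>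
         F_total N S \<gamma> (\<lambda>n s. \<omega> (n,s)) \<le> Max (F_total N S \<gamma> ` vertices N S)"
  apply (rule vertex_bound)
  using coord_space[OF _ _ assms(2)] assms(1) by blast

lemma prod_abs_le1:
  assumes "finite A" "\<And>n. n \<in> A \<Longrightarrow> \<bar>f n\<bar> \<le> (1::real)"
  shows "\<bar>\<Prod>n\<in>A. f n\<bar> \<le> 1"
  unfolding abs_prod using assms by (intro prod_le_1) auto

lemma LHV_Bell:
  assumes S1: "\<forall>n<N. S n \<ge> 1" and L: "\<forall>n<N. \<forall>s<S n. Lam n s \<subseteq> {-1..1}"
    and mu: "prob_space \<mu>" and sets: "sets \<mu> = sets (hidden_space N S Lam)"
    and P: "\<forall>s\<in>settings N S. distr \<mu> (outcome_space N Lam s) (\<lambda>\<omega>. \<lambda>n\<in>{..<N}. \<omega> (n, s n)) = P s"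
  shows "Bell_value N S \<gamma> P = (\<integral>\<omega>. F_total N S \<gamma> (\<lambda>n s. \<omega> (n,s)) \<partial>\<mu>)"
proof -
  interpret prob_space \<mu> by (rule mu)
  have sp: "space \<mu> = space (hidden_space N S Lam)" using sets by (rule sets_eq_imp_space_eq)
  have mc: "measurable \<mu> X = measurable (hidden_space N S Lam) X" for X
    using sets by (intro measurable_cong_sets) auto
  have int: "integrable \<mu> (\<lambda>\<omega>. \<Prod>n\<in>A. \<omega> (n, t n))"
    if A: "A \<in> site_sets N" and t: "t \<in> PiE A (\<lambda>n. {..<S n})" for A t
  proof (rule integrable_const_bound[where B=1])
    show "AE x in \<mu>. norm (\<Prod>n\<in>A. x (n, t n)) \<le> 1"
    proof (rule AE_I2)
      fix x assume x: "x \<in> space \<mu>"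
      show "norm (\<Prod>n\<in>A. x (n, t n)) \<le> 1"
        unfolding real_norm_def
      proof (rule prod_abs_le1)
        show "finite A" using sitesD[OF A] by simp
        fix n assume n: "n \<in> A"
        then have "n < N" "t n < S n" using sitesD[OF A] t by (auto simp: PiE_def Pi_def)
        then show "\<bar>x (n, t n)\<bar> \<le> 1" using coord_space[of n N "t n" S x Lam] x sp L by fastforce
      qed
    qed
    show "(\<lambda>\<omega>. \<Prod>n\<in>A. \<omega> (n, t n)) \<in> borel_measurable \<mu>"
      unfolding mc
      apply (intro borel_measurable_prod)
      apply (rule coord_borel)
      using sitesD[OF A] t by (auto simp: PiE_def Pi_def)
  qed
  have corr: "correlation N P A t = (\<integral>\<omega>. (\<Prod>n\<in>A. \<omega> (n, t n)) \<partial>\<mu>)"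
    if A: "A \<in> site_sets N" and t: "t \<in> PiE A (\<lambda>n. {..<S n})" for A t
  proof -
    define s where "s = extend_setting N A t"
    have s: "s \<in> settings N S"
      using sitesD[OF A] t S1 unfolding s_def extend_setting_def settings_def
      by (auto simp: PiE_def Pi_def)
    have "correlation N P A t = (\<integral>x. (\<Prod>n\<in>A. x n) \<partial>(distr \<mu> (outcome_space N Lam s) (\<lambda>\<omega>. \<lambda>n\<in>{..<N}. \<omega> (n, s n))))"
      unfolding correlation_def s_def[symmetric] using P s by simp
    also have "\<dots> = (\<integral>\<omega>. (\<Prod>n\<in>A. (\<lambda>n\<in>{..<N}. \<omega> (n, s n)) n) \<partial>\<mu>)"
    proof (rule integral_distr)
      show "(\<lambda>\<omega>. \<lambda>n\<in>{..<N}. \<omega> (n, s n)) \<in> measurable \<mu> (outcome_space N Lam s)"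
        unfolding mc by (rule g_meas[OF s])
      show "(\<lambda>x. \<Prod>n\<in>A. x n) \<in> borel_measurable (outcome_space N Lam s)"
      proof (intro borel_measurable_prod)
        fix n assume n: "n \<in> A"
        then have "n \<in> {..<N}" using sitesD[OF A] by auto
        from measurable_compose[OF measurable_component_singleton[OF this, of "\<lambda>n. restrict_space borel (Lam n (s n))"]
             measurable_restrict_space1[OF measurable_ident]]
        show "(\<lambda>x. x n) \<in> borel_measurable (outcome_space N Lam s)"
          unfolding outcome_space_def by simp
      qed
    qed
    also have "\<dots> = (\<integral>\<omega>. (\<Prod>n\<in>A. \<omega> (n, t n)) \<partial>\<mu>)"
      apply (rule Bochner_Integration.integral_cong[OF refl])
      apply (rule prod.cong[OF refl])
      using sitesD[OF A] by (auto simp: s_def extend_setting_def)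
    finally show ?thesis .
  qed
  have "Bell_value N S \<gamma> P = (\<Sum>A\<in>site_sets N. \<Sum>t\<in>PiE A (\<lambda>n. {..<S n}). \<integral>\<omega>. \<gamma> A t * (\<Prod>n\<in>A. \<omega> (n, t n)) \<partial>\<mu>)"
    unfolding Bell_value_def
    by (intro sum.cong refl) (simp add: corr)
  also have "\<dots> = (\<integral>\<omega>. (\<Sum>A\<in>site_sets N. \<Sum>t\<in>PiE A (\<lambda>n. {..<S n}). \<gamma> A t * (\<Prod>n\<in>A. \<omega> (n, t n))) \<partial>\<mu>)"
  proof -
    have i1: "integrable \<mu> (\<lambda>\<omega>. \<gamma> A t * (\<Prod>n\<in>A. \<omega> (n, t n)))"
      if "A \<in> site_sets N" "t \<in> PiE A (\<lambda>n. {..<S n})" for A t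
      using int[OF that] by (rule integrable_mult_right)
    have i2: "integrable \<mu> (\<lambda>\<omega>. \<Sum>t\<in>PiE A (\<lambda>n. {..<S n}). \<gamma> A t * (\<Prod>n\<in>A. \<omega> (n, t n)))"
      if "A \<in> site_sets N" for A
      by (rule Bochner_Integration.integrable_sum, rule i1[OF that])
    show ?thesis
      apply (subst Bochner_Integration.integral_sum[OF i2], assumption)
      apply (intro sum.cong refl)
      apply (subst Bochner_Integration.integral_sum[OF i1], assumption, assumption)
      apply simp
      done
  qed
  finally show ?thesis unfolding F_total_def F_gamma_def .
qed


lemma LHV_from_mu:
  assumes mu: "prob_space \<mu>" and sets: "sets \<mu> = sets (hidden_space N S Lam)"
  shows "LHV_experiment N S Lam (\<lambda>s. distr \<mu> (outcome_space N Lam s) (\<lambda>\<omega>. \<lambda>n\<in>{..<N}. \<omega> (n, s n)))"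
proof -
  have mc: "measurable \<mu> X = measurable (hidden_space N S Lam) X" for X
    using sets by (intro measurable_cong_sets) auto
  show ?thesis
    unfolding LHV_experiment_def corr_experiment_def admits_LHV_def
    using mu sets
    by (auto intro!: prob_space.prob_space_distr g_meas simp: mc)
qed

lemma integral_bounds:
  fixes f :: "'a \<Rightarrow> real"
  assumes mu: "prob_space \<mu>" and f: "f \<in> borel_measurable \<mu>"
    and b: "\<And>x. x \<in> space \<mu> \<Longrightarrow> a \<le> f x \<and> f x \<le> b"
  shows "a \<le> (\<integral>x. f x \<partial>\<mu>) \<and> (\<integral>x. f x \<partial>\<mu>) \<le> b"
proof -
  interpret prob_space \<mu> by (rule mu)
  have i: "integrable \<mu> f"
  proof (rule integrable_const_bound[where B="\<bar>a\<bar> + \<bar>b\<bar>"])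
    show "AE x in \<mu>. norm (f x) \<le> \<bar>a\<bar> + \<bar>b\<bar>"
      by (rule AE_I2) (use b in fastforce)
  qed (rule f)
  have "(\<integral>x. a \<partial>\<mu>) \<le> (\<integral>x. f x \<partial>\<mu>)" by (rule integral_mono) (use i b in auto)
  moreover have "(\<integral>x. f x \<partial>\<mu>) \<le> (\<integral>x. b \<partial>\<mu>)" by (rule integral_mono) (use i b in auto)
  ultimately show ?thesis by (simp add: prob_space)
qed

lemma approx:
  assumes S1: "\<forall>n<N. S n \<ge> 1"
    and L: "\<forall>n<N. \<forall>s<S n. Lam n s \<noteq> {} \<and> Lam n s \<subseteq> {-1..1} \<and> Sup (Lam n s) = 1 \<and> Inf (Lam n s) = -1"
    and v: "v \<in> vertices N S" and e: "\<epsilon> > 0"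
  shows "\<exists>P'. LHV_experiment N S Lam P' \<and> \<bar>Bell_value N S \<gamma> P' - F_total N S \<gamma> v\<bar> < \<epsilon>"
proof -
  have L1: "\<forall>n<N. \<forall>s<S n. Lam n s \<subseteq> {-1..1}" using L by blast
  have ex: "\<exists>x. x \<in> Lam n s \<and> \<bar>x - v n s\<bar> < inverse (real (Suc k))"
    if ns: "n < N" "s < S n" for n s k
  proof -
    have d: "inverse (real (Suc k)) > 0" by simp
    have vv: "v n s \<in> {-1,1}" using v ns unfolding vertices_def by (auto simp: PiE_def Pi_def)
    have ne: "Lam n s \<noteq> {}" and sub: "Lam n s \<subseteq> {-1..1}" and sup: "Sup (Lam n s) = 1"
      and inf: "Inf (Lam n s) = -1" using L ns by auto
    show ?thesis
    proof (cases "v n s = 1")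
      case True
      have "1 - inverse (real (Suc k)) < Sup (Lam n s)" using sup d by simp
      from less_cSupD[OF ne this] obtain x where "x \<in> Lam n s" "1 - inverse (real (Suc k)) < x" by blast
      then show ?thesis using sub True by (intro exI[of _ x]) auto
    next
      case False
      then have vm: "v n s = -1" using vv by auto
      have "Inf (Lam n s) < -1 + inverse (real (Suc k))" using inf d by simp
      from cInf_lessD[OF ne this] obtain x where "x \<in> Lam n s" "x < -1 + inverse (real (Suc k))" by blast
      then show ?thesis using sub vm by (intro exI[of _ x]) auto
    qed
  qed
  define \<omega> where "\<omega> k = (\<lambda>p\<in>all_pairs N S. SOME x. x \<in> Lam (fst p) (snd p) \<and> \<bar>x - v (fst p) (snd p)\<bar> < inverse (real (Suc k)))" for k
  have \<omega>p: "\<omega> k (n,s) \<in> Lam n s \<and> \<bar>\<omega> k (n,s) - v n s\<bar> < inverse (real (Suc k))"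
    if "n < N" "s < S n" for n s k
    using someI_ex[OF ex[OF that, of k]] that by (simp add: \<omega>_def all_pairs_def)
  have \<omega>sp: "\<omega> k \<in> space (hidden_space N S Lam)" for k
    unfolding hidden_space_def space_PiM
    using \<omega>p by (auto simp: \<omega>_def all_pairs_def space_restrict_space PiE_def Pi_def)
  define P' where "P' k = (\<lambda>s. distr (return (hidden_space N S Lam) (\<omega> k)) (outcome_space N Lam s) (\<lambda>\<omega>. \<lambda>n\<in>{..<N}. \<omega> (n, s n)))" for k
  have LHV: "LHV_experiment N S Lam (P' k)" for k
    unfolding P'_def by (rule LHV_from_mu) (auto intro: prob_space_return \<omega>sp)
  have Bell: "Bell_value N S \<gamma> (P' k) = F_total N S \<gamma> (\<lambda>n s. \<omega> k (n,s))" for k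
  proof -
    have "Bell_value N S \<gamma> (P' k) = (\<integral>x. F_total N S \<gamma> (\<lambda>n s. x (n,s)) \<partial>return (hidden_space N S Lam) (\<omega> k))"
      by (rule LHV_Bell[OF S1 L1]) (auto intro: prob_space_return \<omega>sp simp: P'_def)
    also have "\<dots> = F_total N S \<gamma> (\<lambda>n s. \<omega> k (n,s))"
      by (rule integral_return[OF \<omega>sp F_meas])
    finally show ?thesis .
  qed
  have coord: "(\<lambda>k. \<omega> k (n,s)) \<longlonglongrightarrow> v n s" if "n < N" "s < S n" for n s
  proof -
    have "(\<lambda>k. \<omega> k (n,s) - v n s) \<longlonglongrightarrow> 0"
    proof (rule Lim_null_comparison)
      show "\<forall>\<^sub>F k in sequentially. norm (\<omega> k (n,s) - v n s) \<le> inverse (real (Suc k))"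
        using \<omega>p[OF that] by (auto intro: always_eventually less_imp_le)
    qed (rule LIMSEQ_inverse_real_of_nat)
    then show ?thesis by (rule LIM_zero_cancel)
  qed
  have lim: "(\<lambda>k. F_total N S \<gamma> (\<lambda>n s. \<omega> k (n,s))) \<longlonglongrightarrow> F_total N S \<gamma> v"
    unfolding F_total_def F_gamma_def
    apply (intro tendsto_sum tendsto_mult_left tendsto_prod)
    apply (rule coord)
    apply (auto dest!: sitesD simp: PiE_def Pi_def)
    done
  from tendstoD[OF lim e] obtain k where "dist (F_total N S \<gamma> (\<lambda>n s. \<omega> k (n,s))) (F_total N S \<gamma> v) < \<epsilon>"
    by (auto simp: eventually_sequentially)
  then show ?thesis using LHV[of k] Bell[of k] by (auto simp: dist_real_def)
qed


theorem corollary1: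
  fixes N :: nat and S :: "nat \<Rightarrow> nat" and Lam :: "nat \<Rightarrow> nat \<Rightarrow> real set"
    and P :: "(nat \<Rightarrow> nat) \<Rightarrow> (nat \<Rightarrow> real) measure"
    and \<gamma> :: "nat set \<Rightarrow> (nat \<Rightarrow> nat) \<Rightarrow> real"
  assumes "N \<ge> 1"
    and "\<forall>n<N. S n \<ge> 1"
    and "\<forall>n<N. \<forall>s<S n. Lam n s \<noteq> {} \<and> Lam n s \<subseteq> {-1..1} \<and> Sup (Lam n s) = 1 \<and> Inf (Lam n s) = -1"
    and "LHV_experiment N S Lam P"
  shows "Min (F_total N S \<gamma> ` vertices N S) \<le> Bell_value N S \<gamma> P
       \<and> Bell_value N S \<gamma> P \<le> Max (F_total N S \<gamma> ` vertices N S)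
       \<and> (\<forall>\<epsilon>>0. \<exists>P'. LHV_experiment N S Lam P' \<and>
             Bell_value N S \<gamma> P' > Max (F_total N S \<gamma> ` vertices N S) - \<epsilon>)
       \<and> (\<forall>\<epsilon>>0. \<exists>P'. LHV_experiment N S Lam P' \<and>
             Bell_value N S \<gamma> P' < Min (F_total N S \<gamma> ` vertices N S) + \<epsilon>)"
proof (intro conjI allI impI)
  have L1: "\<forall>n<N. \<forall>s<S n. Lam n s \<subseteq> {-1..1}" using assms(3) by blast
  obtain \<mu> where mu: "prob_space \<mu>" and sets: "sets \<mu> = sets (hidden_space N S Lam)"
    and P: "\<forall>s\<in>settings N S. distr \<mu> (outcome_space N Lam s) (\<lambda>\<omega>. \<lambda>n\<in>{..<N}. \<omega> (n, s n)) = P s"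
    using assms(4) unfolding LHV_experiment_def admits_LHV_def by blast
  have sp: "space \<mu> = space (hidden_space N S Lam)" using sets by (rule sets_eq_imp_space_eq)
  have mc: "measurable \<mu> X = measurable (hidden_space N S Lam) X" for X
    using sets by (intro measurable_cong_sets) auto
  have B: "Bell_value N S \<gamma> P = (\<integral>\<omega>. F_total N S \<gamma> (\<lambda>n s. \<omega> (n,s)) \<partial>\<mu>)"
    by (rule LHV_Bell[OF assms(2) L1 mu sets P])
  have bd: "Min (F_total N S \<gamma> ` vertices N S) \<le> Bell_value N S \<gamma> P \<and> Bell_value N S \<gamma> P \<le> Max (F_total N S \<gamma> ` vertices N S)"
    unfolding B
    by (rule integral_bounds[OF mu]) (auto simp: mc sp intro: F_meas dest: F_bounded[OF L1, of _ \<gamma>])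
  then show "Min (F_total N S \<gamma> ` vertices N S) \<le> Bell_value N S \<gamma> P" by blast
  from bd show "Bell_value N S \<gamma> P \<le> Max (F_total N S \<gamma> ` vertices N S)" by blast
next
  fix \<epsilon> :: real assume e: "\<epsilon> > 0"
  have "Max (F_total N S \<gamma> ` vertices N S) \<in> F_total N S \<gamma> ` vertices N S"
    using vertices_fin by (intro Max_in) auto
  then obtain v where v: "v \<in> vertices N S" "F_total N S \<gamma> v = Max (F_total N S \<gamma> ` vertices N S)" by auto
  from approx[OF assms(2,3) v(1) e] v(2)
  show "\<exists>P'. LHV_experiment N S Lam P' \<and> Bell_value N S \<gamma> P' > Max (F_total N S \<gamma> ` vertices N S) - \<epsilon>"
    by (metis abs_diff_less_iff)
next
  fix \<epsilon> :: real assume e: "\<epsilon> > 0"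
  have "Min (F_total N S \<gamma> ` vertices N S) \<in> F_total N S \<gamma> ` vertices N S"
    using vertices_fin by (intro Min_in) auto
  then obtain v where v: "v \<in> vertices N S" "F_total N S \<gamma> v = Min (F_total N S \<gamma> ` vertices N S)" by auto
  from approx[OF assms(2,3) v(1) e] v(2)
  show "\<exists>P'. LHV_experiment N S Lam P' \<and> Bell_value N S \<gamma> P' < Min (F_total N S \<gamma> ` vertices N S) + \<epsilon>"
    by (metis abs_diff_less_iff)
qed

end
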